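(* Let $S$ and $T$ be IP-regular semigroups, and suppose $T$ has no idempotent elements. Then the free product $S*T$ is IP-regular.
   Context: For a (partial) semigroup $P$, $E(P)$ is the set of idempotents; any subset $X$ carries the induced partial operation ($ab$ defined iff $ab\in X$). For a sequence $\vec{x}=(x_n)_{n\in\omega}$ all of whose finite ordered products $\prod_{i\in a}x_i$ ($a$ finite nonempty subset of $\omega$) are defined, $\mathrm{FP}(\vec{x})$ is the set of these products, $\mathrm{FP}_1(\vec{x})=\mathrm{FP}((x_{n+1})_n)$; an IP-set is a set containing such an $\mathrm{FP}(\vec{x})$. $X$ is strongly IP-regular if for every sequence $\vec{x}$ in $X$ with all finite products defined in $X$, $x_0\mathrm{FP}_1(\vec{x})$ is not an IP-set of $X$. $P$ is IP-regular if $P\setminus E(P)$ is a union of finitely many strongly IP-regular subsets. *)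

theory Defs
  imports Main
begin

(* A semigroup is given by an ambient carrier P and an operation f (associative, closed on P).
   Subsets X of P carry the induced partial operation. *)

fun lprod :: "('a \<Rightarrow> 'a \<Rightarrow> 'a) \<Rightarrow> 'a list \<Rightarrow> 'a" where
  "lprod f [] = undefined"
| "lprod f [y] = y"
| "lprod f (y # z # ys) = f y (lprod f (z # ys))"

definition oprod :: "('a \<Rightarrow> 'a \<Rightarrow> 'a) \<Rightarrow> (nat \<Rightarrow> 'a) \<Rightarrow> nat set \<Rightarrow> 'a" where
  "oprod f x a = lprod f (map x (sorted_list_of_set a))"

definition FP :: "('a \<Rightarrow> 'a \<Rightarrow> 'a) \<Rightarrow> (nat \<Rightarrow> 'a) \<Rightarrow> 'a set" where
  "FP f x = {oprod f x a | a. finite a \<and> a \<noteq> {}}"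

definition FP1 :: "('a \<Rightarrow> 'a \<Rightarrow> 'a) \<Rightarrow> (nat \<Rightarrow> 'a) \<Rightarrow> 'a set" where
  "FP1 f x = FP f (\<lambda>n. x (Suc n))"

definition idems :: "'a set \<Rightarrow> ('a \<Rightarrow> 'a \<Rightarrow> 'a) \<Rightarrow> 'a set" where
  "idems P f = {p \<in> P. f p p = p}"

text \<open>All finite ordered products of x are defined in X (w.r.t. the induced partial
  operation) iff every finite product lies in X.\<close>
definition FP_defined_in :: "('a \<Rightarrow> 'a \<Rightarrow> 'a) \<Rightarrow> 'a set \<Rightarrow> (nat \<Rightarrow> 'a) \<Rightarrow> bool" where
  "FP_defined_in f X x \<longleftrightarrow> FP f x \<subseteq> X"

definition IP_set_of :: "('a \<Rightarrow> 'a \<Rightarrow> 'a) \<Rightarrow> 'a set \<Rightarrow> 'a set \<Rightarrow> bool" where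
  "IP_set_of f X A \<longleftrightarrow> A \<subseteq> X \<and> (\<exists>y. FP_defined_in f X y \<and> FP f y \<subseteq> A)"

definition strongly_IP_regular :: "('a \<Rightarrow> 'a \<Rightarrow> 'a) \<Rightarrow> 'a set \<Rightarrow> bool" where
  "strongly_IP_regular f X \<longleftrightarrow>
     (\<forall>x. FP_defined_in f X x \<longrightarrow> \<not> IP_set_of f X ((\<lambda>p. f (x 0) p) ` FP1 f x))"

definition IP_regular :: "'a set \<Rightarrow> ('a \<Rightarrow> 'a \<Rightarrow> 'a) \<Rightarrow> bool" where
  "IP_regular P f \<longleftrightarrow>
     (\<exists>\<F>. finite \<F> \<and> \<Union>\<F> = P - idems P f \<and> (\<forall>X\<in>\<F>. strongly_IP_regular f X))"

text \<open>Elements of S*T: nonempty words over S + T whose consecutive letters come from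
  different factors; multiplication is concatenation followed by merging the two
  letters at the junction if they come from the same factor.\<close>

fun same_side :: "'a + 'b \<Rightarrow> 'a + 'b \<Rightarrow> bool" where
  "same_side (Inl _) (Inl _) = True"
| "same_side (Inr _) (Inr _) = True"
| "same_side _ _ = False"

definition alternating :: "('a + 'b) list \<Rightarrow> bool" where
  "alternating xs \<longleftrightarrow> (\<forall>i. Suc i < length xs \<longrightarrow> \<not> same_side (xs ! i) (xs ! Suc i))"

definition free_prod_carrier :: "('a + 'b) list set" where
  "free_prod_carrier = {xs. xs \<noteq> [] \<and> alternating xs}"

fun merge_letters :: "'a::semigroup_mult + 'b::semigroup_mult \<Rightarrow> 'a + 'b \<Rightarrow> ('a + 'b) list" where
  "merge_letters (Inl a) (Inl b) = [Inl (a * b)]"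
| "merge_letters (Inr a) (Inr b) = [Inr (a * b)]"
| "merge_letters u v = [u, v]"

definition free_prod_mult ::
  "('a::semigroup_mult + 'b::semigroup_mult) list \<Rightarrow> ('a + 'b) list \<Rightarrow> ('a + 'b) list" where
  "free_prod_mult xs ys =
     (if xs = [] then ys else if ys = [] then xs
      else butlast xs @ merge_letters (last xs) (hd ys) @ tl ys)"

end

theory Submission
  imports Defs
begin

lemma lprod_hom:
  assumes hom: "\<And>u v. u \<in> D \<Longrightarrow> v \<in> D \<Longrightarrow> f u v \<in> D \<and> h (f u v) = g (h u) (h v)"
  shows "l \<noteq> [] \<Longrightarrow> set l \<subseteq> D \<Longrightarrow> lprod f l \<in> D \<and> h (lprod f l) = lprod g (map h l)"
proof (induction l)
  case (Cons y l)
  show ?case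
  proof (cases l)
    case Nil then show ?thesis using Cons by simp
  next
    case (Cons z ys)
    have "lprod f l \<in> D \<and> h (lprod f l) = lprod g (map h l)" using Cons.IH Cons.prems Cons by auto
    moreover have "y \<in> D" using Cons.prems by auto
    ultimately show ?thesis using Cons hom[of y "lprod f l"] by simp
  qed
qed simp

lemma in_FP: "finite a \<Longrightarrow> a \<noteq> {} \<Longrightarrow> oprod f x a \<in> FP f x"
  by (auto simp: FP_def)

lemma oprod_hom:
  assumes hom: "\<And>u v. u \<in> D \<Longrightarrow> v \<in> D \<Longrightarrow> f u v \<in> D \<and> h (f u v) = g (h u) (h v)"
    and "\<forall>i. z i \<in> D" "finite a" "a \<noteq> {}"
  shows "oprod f z a \<in> D \<and> h (oprod f z a) = oprod g (\<lambda>i. h (z i)) a"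
proof -
  have "sorted_list_of_set a \<noteq> []" using assms by simp
  then have "map z (sorted_list_of_set a) \<noteq> []" by simp
  moreover have "set (map z (sorted_list_of_set a)) \<subseteq> D" using assms by auto
  ultimately show ?thesis using lprod_hom[of D f h g, OF hom] unfolding oprod_def
    by (simp add: comp_def)
qed

lemma FP_iff: "q \<in> FP f x \<longleftrightarrow> (\<exists>a. finite a \<and> a \<noteq> {} \<and> q = oprod f x a)"
  by (auto simp: FP_def)

lemma oprod_single: "oprod f x {i} = x i"
  by (simp add: oprod_def)

lemma single_in_FP: "x i \<in> FP f x"
  unfolding FP_iff by (rule exI[of _ "{i}"]) (simp add: oprod_single)

lemma pullback:
  assumes hom: "\<And>u v. u \<in> D \<Longrightarrow> v \<in> D \<Longrightarrow> f u v \<in> D \<and> h (f u v) = g (h u) (h v)"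
    and XD: "X \<subseteq> D" and hX: "h ` X \<subseteq> Z" and Z: "strongly_IP_regular g Z"
  shows "strongly_IP_regular f X"
  unfolding strongly_IP_regular_def
proof (intro allI impI notI)
  fix x assume fx: "FP_defined_in f X x" and ip: "IP_set_of f X ((\<lambda>p. f (x 0) p) ` FP1 f x)"
  have xD: "\<forall>i. x i \<in> D" using fx XD single_in_FP unfolding FP_defined_in_def by blast
  have xsD: "\<forall>i. x (Suc i) \<in> D" using xD by blast
  obtain y where fy: "FP f y \<subseteq> X" "FP f y \<subseteq> (\<lambda>p. f (x 0) p) ` FP1 f x"
    using ip unfolding IP_set_of_def FP_defined_in_def by blast
  have AX: "(\<lambda>p. f (x 0) p) ` FP1 f x \<subseteq> X" using ip unfolding IP_set_of_def by blast
  have yD: "\<forall>i. y i \<in> D" using fy XD single_in_FP by blast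
  have 1: "FP_defined_in g Z (\<lambda>i. h (x i))"
    unfolding FP_defined_in_def
  proof
    fix q assume "q \<in> FP g (\<lambda>i. h (x i))"
    then obtain a where a: "finite a" "a \<noteq> {}" "q = oprod g (\<lambda>i. h (x i)) a"
      unfolding FP_iff by blast
    have "oprod f x a \<in> X" using fx in_FP[OF a(1,2)] unfolding FP_defined_in_def by blast
    moreover have "q = h (oprod f x a)" using oprod_hom[of D f h g, OF hom xD a(1,2)] a(3) by simp
    ultimately show "q \<in> Z" using hX by blast
  qed
  have key: "g (h (x 0)) p' \<in> h ` ((\<lambda>p. f (x 0) p) ` FP1 f x)"
    if "p' \<in> FP1 g (\<lambda>i. h (x i))" for p'
  proof -
    from that obtain b where b: "finite b" "b \<noteq> {}" "p' = oprod g (\<lambda>i. h (x (Suc i))) b"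
      unfolding FP1_def FP_iff by blast
    have hb: "oprod f (\<lambda>i. x (Suc i)) b \<in> D \<and> h (oprod f (\<lambda>i. x (Suc i)) b) = p'"
      using oprod_hom[of D f h g, OF hom xsD b(1,2)] b(3) by simp
    have "oprod f (\<lambda>i. x (Suc i)) b \<in> FP1 f x" unfolding FP1_def using in_FP[OF b(1,2)] by blast
    moreover have "h (f (x 0) (oprod f (\<lambda>i. x (Suc i)) b)) = g (h (x 0)) p'"
      using hom[of "x 0" "oprod f (\<lambda>i. x (Suc i)) b"] xD hb by simp
    ultimately show ?thesis by (metis image_eqI)
  qed
  have 2: "IP_set_of g Z ((\<lambda>p. g ((\<lambda>i. h (x i)) 0) p) ` FP1 g (\<lambda>i. h (x i)))"
    unfolding IP_set_of_def
  proof (intro conjI exI)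
    show "(\<lambda>p. g ((\<lambda>i. h (x i)) 0) p) ` FP1 g (\<lambda>i. h (x i)) \<subseteq> Z"
      using key AX hX by fastforce
    show "FP_defined_in g Z (\<lambda>i. h (y i))"
      unfolding FP_defined_in_def
    proof
      fix q assume "q \<in> FP g (\<lambda>i. h (y i))"
      then obtain a where a: "finite a" "a \<noteq> {}" "q = oprod g (\<lambda>i. h (y i)) a"
        unfolding FP_iff by blast
      have "oprod f y a \<in> X" using fy in_FP[OF a(1,2)] by blast
      moreover have "q = h (oprod f y a)" using oprod_hom[of D f h g, OF hom yD a(1,2)] a(3) by simp
      ultimately show "q \<in> Z" using hX by blast
    qed
    show "FP g (\<lambda>i. h (y i)) \<subseteq> (\<lambda>p. g ((\<lambda>i. h (x i)) 0) p) ` FP1 g (\<lambda>i. h (x i))"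
    proof
      fix q assume "q \<in> FP g (\<lambda>i. h (y i))"
      then obtain a where a: "finite a" "a \<noteq> {}" "q = oprod g (\<lambda>i. h (y i)) a"
        unfolding FP_iff by blast
      have q: "q = h (oprod f y a)" using oprod_hom[of D f h g, OF hom yD a(1,2)] a(3) by simp
      have "oprod f y a \<in> (\<lambda>p. f (x 0) p) ` FP1 f x" using fy in_FP[OF a(1,2)] by blast
      then obtain p where p: "p \<in> FP1 f x" "oprod f y a = f (x 0) p" by blast
      then obtain b where b: "finite b" "b \<noteq> {}" "p = oprod f (\<lambda>i. x (Suc i)) b"
        unfolding FP1_def FP_iff by blast
      have hb: "p \<in> D \<and> h p = oprod g (\<lambda>i. h (x (Suc i))) b"
        using oprod_hom[of D f h g, OF hom xsD b(1,2)] b(3) by simp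
      have "q = g (h (x 0)) (oprod g (\<lambda>i. h (x (Suc i))) b)"
        using q p(2) hom[of "x 0" p] xD hb by simp
      moreover have "oprod g (\<lambda>i. h (x (Suc i))) b \<in> FP1 g (\<lambda>i. h (x i))"
        unfolding FP1_def using in_FP[OF b(1,2)] by blast
      ultimately show "q \<in> (\<lambda>p. g ((\<lambda>i. h (x i)) 0) p) ` FP1 g (\<lambda>i. h (x i))" by simp
    qed
  qed
  show False using Z 1 2 unfolding strongly_IP_regular_def by blast
qed

fun oc :: "'b::semigroup_mult option \<Rightarrow> 'b option \<Rightarrow> 'b option" where
  "oc None y = y"
| "oc x None = x"
| "oc (Some a) (Some b) = Some (a * b)"

lemma oc_None_right[simp]: "oc a None = a" by (cases a) auto
lemma oc_Some_left[simp]: "oc (Some t) y \<noteq> None" by (cases y) auto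
lemma oc_assoc: "oc (oc a b) c = oc a (oc b c)"
  by (cases a; cases b; cases c) (simp_all add: mult.assoc)

fun evR :: "('a + 'b::semigroup_mult) list \<Rightarrow> 'b option" where
  "evR [] = None"
| "evR (Inl _ # xs) = evR xs"
| "evR (Inr t # xs) = oc (Some t) (evR xs)"

lemma evR_append: "evR (xs @ ys) = oc (evR xs) (evR ys)"
  by (induction xs rule: evR.induct) (auto simp: oc_assoc)

lemma evR_merge: "evR (merge_letters a b) = oc (evR [a]) (evR [b])"
  by (cases a; cases b) auto

lemma evR_mult: "evR (free_prod_mult u v) = oc (evR u) (evR v)"
proof (cases "u = [] \<or> v = []")
  case True then show ?thesis by (auto simp: free_prod_mult_def)
next
  case False
  have u: "evR u = oc (evR (butlast u)) (evR [last u])"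
    using append_butlast_last_id[of u] evR_append[of "butlast u" "[last u]"] False by simp
  have v: "evR v = oc (evR [hd v]) (evR (tl v))"
    using hd_Cons_tl[of v] evR_append[of "[hd v]" "tl v"] False by simp
  show ?thesis using False unfolding free_prod_mult_def
    by (simp add: evR_append evR_merge oc_assoc u v)
qed

lemma evR_None_isl: "evR w = None \<Longrightarrow> x \<in> set w \<Longrightarrow> isl x"
  by (induction w rule: evR.induct) auto

lemma all_isl_single:
  assumes "w \<in> free_prod_carrier" "evR w = None"
  shows "\<exists>s. w = [Inl s]"
proof -
  have all: "\<And>x. x \<in> set w \<Longrightarrow> isl x" using evR_None_isl assms(2) by blast
  obtain a rest where w: "w = a # rest" using assms(1) unfolding free_prod_carrier_def
    by (cases w) auto
  have "rest = []"
  proof (rule ccontr)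
    assume "rest \<noteq> []"
    then obtain b r where "rest = b # r" by (cases rest) auto
    have alt: "alternating w" using assms(1) unfolding free_prod_carrier_def by simp
    have "Suc 0 < length w" using w \<open>rest = b # r\<close> by simp
    then have "\<not> same_side (w ! 0) (w ! Suc 0)" using alt unfolding alternating_def by blast
    then have "\<not> same_side a b" using w \<open>rest = b # r\<close> by simp
    moreover have "isl a" "isl b" using all w \<open>rest = b # r\<close> by auto
    ultimately show False by (cases a; cases b) auto
  qed
  moreover have "isl a" using all w by auto
  ultimately show ?thesis using w by (cases a) auto
qed

theorem mainTheorem12:
  assumes "IP_regular (UNIV :: 'a::semigroup_mult set) (*)"
      and "IP_regular (UNIV :: 'b::semigroup_mult set) (*)"
      and "idems (UNIV :: 'b set) (*) = {}"
  shows "IP_regular (free_prod_carrier :: ('a + 'b) list set) free_prod_mult"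
proof -
  obtain FS where FS: "finite FS" "\<Union>FS = (UNIV :: 'a set) - idems UNIV (*)"
    "\<forall>X\<in>FS. strongly_IP_regular (*) X" using assms(1) unfolding IP_regular_def by blast
  obtain FT where FT: "finite FT" "\<Union>FT = (UNIV :: 'b set) - idems UNIV (*)"
    "\<forall>X\<in>FT. strongly_IP_regular (*) X" using assms(2) unfolding IP_regular_def by blast
  define C where "C = (free_prod_carrier :: ('a + 'b) list set)"
  define XT where "XT Y = {w \<in> C. \<exists>t\<in>Y. evR w = Some t}" for Y :: "'b set"
  define XS where "XS X = ({[Inl s] | s. s \<in> X} :: ('a + 'b) list set)" for X :: "'a set"
  define F where "F = XT ` FT \<union> XS ` FS"
  have nidT: "t * t \<noteq> t" for t :: 'b using assms(3) unfolding idems_def by auto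
  have single_C: "[Inl s] \<in> C" for s :: 'a
    unfolding C_def free_prod_carrier_def alternating_def by auto
  have U: "\<Union>F = C - idems C free_prod_mult"
  proof
    show "\<Union>F \<subseteq> C - idems C free_prod_mult"
    proof
      fix w assume "w \<in> \<Union>F"
      then consider Y where "Y \<in> FT" "w \<in> XT Y" | X where "X \<in> FS" "w \<in> XS X"
        unfolding F_def by blast
      then show "w \<in> C - idems C free_prod_mult"
      proof cases
        case 1
        then obtain t where t: "w \<in> C" "evR w = Some t" unfolding XT_def by blast
        have "free_prod_mult w w \<noteq> w"
        proof
          assume "free_prod_mult w w = w"
          then have "evR w = oc (evR w) (evR w)" by (metis evR_mult)
          then have "t * t = t" using t by simp
          then show False using nidT by blast
        qed
        then show ?thesis using t unfolding idems_def by auto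
      next
        case 2
        then obtain s where s: "w = [Inl s]" "s \<in> X" unfolding XS_def by blast
        then have "s * s \<noteq> s" using 2 FS(2) unfolding idems_def by blast
        then have "free_prod_mult w w \<noteq> w" using s by (simp add: free_prod_mult_def)
        then show ?thesis using s single_C unfolding idems_def by auto
      qed
    qed
  next
    show "C - idems C free_prod_mult \<subseteq> \<Union>F"
    proof
      fix w assume w: "w \<in> C - idems C free_prod_mult"
      show "w \<in> \<Union>F"
      proof (cases "evR w")
        case None
        then obtain s where s: "w = [Inl s]" using all_isl_single w unfolding C_def by blast
        then have "s * s \<noteq> s" using w by (auto simp: idems_def free_prod_mult_def)
        then have "s \<in> \<Union>FS" using FS(2) unfolding idems_def by blast
        then obtain X where "X \<in> FS" "s \<in> X" by blast
        then have "w \<in> XS X" using s unfolding XS_def by blast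
        then show ?thesis using \<open>X \<in> FS\<close> unfolding F_def by blast
      next
        case (Some t)
        have "t \<in> \<Union>FT" using FT(2) nidT unfolding idems_def by blast
        then obtain Y where "Y \<in> FT" "t \<in> Y" by blast
        then have "w \<in> XT Y" using w Some unfolding XT_def by blast
        then show ?thesis using \<open>Y \<in> FT\<close> unfolding F_def by blast
      qed
    qed
  qed
  have fin: "finite F" using FS(1) FT(1) unfolding F_def by blast
  have SR: "\<forall>X\<in>F. strongly_IP_regular free_prod_mult X"
  proof
    fix X assume "X \<in> F"
    then consider Y where "Y \<in> FT" "X = XT Y" | Z where "Z \<in> FS" "X = XS Z"
      unfolding F_def by blast
    then show "strongly_IP_regular free_prod_mult X"
    proof cases
      case 1
      show ?thesis
      proof (rule pullback[where D = "{w. evR w \<noteq> None}" and h = "\<lambda>w. the (evR w)"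
            and g = "(*)" and Z = Y])
        fix u v :: "('a + 'b) list" assume "u \<in> {w. evR w \<noteq> None}" "v \<in> {w. evR w \<noteq> None}"
        then show "free_prod_mult u v \<in> {w. evR w \<noteq> None} \<and>
             the (evR (free_prod_mult u v)) = the (evR u) * the (evR v)"
          by (auto simp: evR_mult)
      next
        show "X \<subseteq> {w. evR w \<noteq> None}" using 1 unfolding XT_def by auto
        show "(\<lambda>w. the (evR w)) ` X \<subseteq> Y" using 1 unfolding XT_def by auto
        show "strongly_IP_regular (*) Y" using 1 FT(3) by blast
      qed
    next
      case 2
      show ?thesis
      proof (rule pullback[where D = "range (\<lambda>s. [Inl s])"
            and h = "\<lambda>w. case hd w of Inl s \<Rightarrow> s | Inr _ \<Rightarrow> undefined"
            and g = "(*)" and Z = Z])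
        fix u v :: "('a + 'b) list" assume "u \<in> range (\<lambda>s. [Inl s])" "v \<in> range (\<lambda>s. [Inl s])"
        then show "free_prod_mult u v \<in> range (\<lambda>s. [Inl s]) \<and>
          (case hd (free_prod_mult u v) of Inl s \<Rightarrow> s | Inr _ \<Rightarrow> undefined) =
          (case hd u of Inl s \<Rightarrow> s | Inr _ \<Rightarrow> undefined) * (case hd v of Inl s \<Rightarrow> s | Inr _ \<Rightarrow> undefined)"
          by (auto simp: free_prod_mult_def)
      next
        show "X \<subseteq> range (\<lambda>s. [Inl s])" using 2 unfolding XS_def by auto
        show "(\<lambda>w. case hd w of Inl s \<Rightarrow> s | Inr _ \<Rightarrow> undefined) ` X \<subseteq> Z"
          using 2 unfolding XS_def by auto
        show "strongly_IP_regular (*) Z" using 2 FS(3) by blast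
      qed
    qed
  qed
  show ?thesis unfolding IP_regular_def
    by (rule exI[of _ F]) (use U fin SR in \<open>simp add: C_def\<close>)
qed

end
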